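(* For the objective of maximizing the expected accepted value, no deterministic order-unaware algorithm has order competitive ratio better than $\frac1\phi$, where $\phi=\frac{1+\sqrt5}{2}$. That is, for every deterministic order-unaware algorithm $\textsf{ALG}$ and every $\delta>0$, there exist an instance (independent distributions $F_1,\dots,F_m$ of nonnegative values) and an arrival order $\pi$ such that $\textsf{ALG}(\pi)\le\left(\frac1\phi+\delta\right)\textsf{OPT}(\pi)$.
   Context: Setting (prophet inequality, max-expectation objective): boxes contain independent values $v_i\sim F_i$ with known distributions; boxes arrive one at a time in an arrival order $\pi$; upon arrival a box's identity and realized value are revealed and an online algorithm must immediately and irrevocably accept it (stopping and receiving its value) or reject it forever; it receives $0$ if it accepts nothing. An order-aware algorithm knows $\pi$ in advance; a deterministic order-unaware algorithm's decision at each step is a deterministic function only of the distributions and the identities and realized values of the boxes that have arrived so far. $\textsf{ALG}(\pi)$ is the expected accepted value of $\textsf{ALG}$ under order $\pi$, and $\textsf{OPT}(\pi)$ is the maximum expected accepted value over all order-aware online algorithms under $\pi$. The order competitive ratio of $\textsf{ALG}$ is $\min_\pi \textsf{ALG}(\pi)/\textsf{OPT}(\pi)$ (worst case also over instances). *)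

theory Defs
  imports "HOL-Probability.Probability"
begin

text \<open>A history is the list of (identity, realized value) pairs of the boxes that have
  arrived so far (including the current box, which is last).\<close>

type_synonym inst = "real pmf list"
type_synonym history = "(nat \<times> real) list"

definition valid_instance :: "inst \<Rightarrow> bool" where
  "valid_instance F \<longleftrightarrow> (\<forall>i < length F. finite (set_pmf (F ! i)) \<and> set_pmf (F ! i) \<subseteq> {0..})"

definition is_order :: "inst \<Rightarrow> nat list \<Rightarrow> bool" where
  "is_order F \<pi> \<longleftrightarrow> distinct \<pi> \<and> set \<pi> = {..<length F}"

fun run_val :: "inst \<Rightarrow> (history \<Rightarrow> bool) \<Rightarrow> nat list \<Rightarrow> history \<Rightarrow> real" where
  "run_val F D [] h = 0"
| "run_val F D (i # rest) h =
     measure_pmf.expectation (F ! i)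
       (\<lambda>x. if D (h @ [(i, x)]) then x else run_val F D rest (h @ [(i, x)]))"

text \<open>A deterministic order-unaware algorithm: its decision depends only on the
  distributions (the inst) and the history.\<close>
type_synonym unaware_alg = "inst \<Rightarrow> history \<Rightarrow> bool"

definition ALG_val :: "unaware_alg \<Rightarrow> inst \<Rightarrow> nat list \<Rightarrow> real" where
  "ALG_val A F \<pi> = run_val F (A F) \<pi> []"

text \<open>OPT(pi): supremum (in fact maximum) of expected value over all order-aware online
  algorithms for the fixed order pi; for fixed pi such an algorithm is any decision rule on
  histories.\<close>
definition OPT_val :: "inst \<Rightarrow> nat list \<Rightarrow> real" where
  "OPT_val F \<pi> = (SUP D. run_val F D \<pi> [])"

definition golden_ratio :: real where
  "golden_ratio = (1 + sqrt 5) / 2"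

end

theory Submission
  imports Defs
begin

definition Jp :: "real \<Rightarrow> real \<Rightarrow> real pmf" where
  "Jp p H = map_pmf (\<lambda>b. if b then H else 0) (bernoulli_pmf p)"

definition Finst :: "(nat \<Rightarrow> real) \<Rightarrow> nat \<Rightarrow> real \<Rightarrow> real \<Rightarrow> inst" where
  "Finst d N p H = map (\<lambda>k. return_pmf (d k)) [0..<Suc N] @ [Jp p H]"

definition hist :: "(nat \<Rightarrow> real) \<Rightarrow> nat \<Rightarrow> history" where
  "hist d m = map (\<lambda>j. (j, d j)) [0..<m]"

lemma hist_Suc: "hist d (Suc j) = hist d j @ [(j, d j)]"
  by (simp add: hist_def)

lemma Finst_len: "length (Finst d N p H) = Suc (Suc N)"
  by (simp add: Finst_def)

lemma Finst_det: "k \<le> N \<Longrightarrow> Finst d N p H ! k = return_pmf (d k)"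
  by (simp add: Finst_def nth_append)

lemma Finst_J: "Finst d N p H ! Suc N = Jp p H"
  by (simp add: Finst_def nth_append)

lemma exp_Jp: "0 \<le> p \<Longrightarrow> p \<le> 1 \<Longrightarrow>
  measure_pmf.expectation (Jp p H) g = g H * p + g 0 * (1 - p)"
  by (simp add: Jp_def)

lemma run_det: "k \<le> N \<Longrightarrow> run_val (Finst d N p H) D (k # rest) h =
  (if D (h @ [(k, d k)]) then d k else run_val (Finst d N p H) D rest (h @ [(k, d k)]))"
  by (simp add: Finst_det)

lemma run_J: "0 \<le> p \<Longrightarrow> p \<le> 1 \<Longrightarrow> run_val (Finst d N p H) D (Suc N # rest) h =
  (if D (h @ [(Suc N, H)]) then H else run_val (Finst d N p H) D rest (h @ [(Suc N, H)])) * p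
  + (if D (h @ [(Suc N, 0)]) then 0 else run_val (Finst d N p H) D rest (h @ [(Suc N, 0)])) * (1 - p)"
  by (simp add: Finst_J exp_Jp)

lemma run_bound:
  assumes "\<forall>k\<le>N. d k \<le> B" "H \<le> B" "0 \<le> B" "0 \<le> p" "p \<le> 1"
  shows "set \<pi> \<subseteq> {..Suc N} \<Longrightarrow> run_val (Finst d N p H) D \<pi> h \<le> B"
proof (induction \<pi> arbitrary: h)
  case Nil
  then show ?case using assms by simp
next
  case (Cons k rest)
  then have IH: "\<And>h. run_val (Finst d N p H) D rest h \<le> B" by simp
  show ?case
  proof (cases "k \<le> N")
    case True
    have "run_val (Finst d N p H) D (k # rest) h =
      (if D (h @ [(k, d k)]) then d k else run_val (Finst d N p H) D rest (h @ [(k, d k)]))"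
      by (rule run_det[OF True])
    then show ?thesis using IH assms True by simp
  next
    case False
    then have k: "k = Suc N" using Cons.prems by auto
    have a: "(if D (h @ [(Suc N, H)]) then H else run_val (Finst d N p H) D rest (h @ [(Suc N, H)])) \<le> B"
      using IH assms by simp
    have b: "(if D (h @ [(Suc N, 0)]) then 0 else run_val (Finst d N p H) D rest (h @ [(Suc N, 0)])) \<le> B"
      using IH assms by simp
    have "run_val (Finst d N p H) D (k # rest) h \<le> B * p + B * (1 - p)"
      unfolding k run_J[OF assms(4,5)]
      by (intro add_mono mult_right_mono a b) (use assms in auto)
    then show ?thesis by (simp add: algebra_simps)
  qed
qed

lemma run_prefix:
  assumes "m \<le> k" "k \<le> Suc N" "\<forall>j. m \<le> j \<and> j < k \<longrightarrow> \<not> D (hist d (Suc j))"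
  shows "run_val (Finst d N p H) D ([m..<k] @ rest) (hist d m) = run_val (Finst d N p H) D rest (hist d k)"
  using assms
proof (induction "k - m" arbitrary: m)
  case 0
  then show ?case by simp
next
  case (Suc x)
  then have mk: "m < k" by simp
  have "[m..<k] = m # [Suc m..<k]" using mk by (simp add: upt_rec)
  then have "run_val (Finst d N p H) D ([m..<k] @ rest) (hist d m)
     = run_val (Finst d N p H) D ([Suc m..<k] @ rest) (hist d (Suc m))"
  proof -
    have mN: "m \<le> N" using mk Suc.prems by simp
    have "run_val (Finst d N p H) D ([m..<k] @ rest) (hist d m) = run_val (Finst d N p H) D (m # ([Suc m..<k] @ rest)) (hist d m)"
      using \<open>[m..<k] = m # [Suc m..<k]\<close> by simp
    also have "\<dots> = run_val (Finst d N p H) D ([Suc m..<k] @ rest) (hist d (Suc m))"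
      unfolding run_det[OF mN] using Suc.prems mk by (simp add: hist_Suc)
    finally show ?thesis .
  qed
  also have "\<dots> = run_val (Finst d N p H) D rest (hist d k)"
    using Suc by simp
  finally show ?case .
qed

lemma OPT_ge:
  assumes "\<forall>k\<le>N. d k \<le> B" "H \<le> B" "0 \<le> B" "0 \<le> p" "p \<le> 1"
    and "set \<pi> \<subseteq> {..Suc N}"
  shows "run_val (Finst d N p H) D \<pi> [] \<le> OPT_val (Finst d N p H) \<pi>"
  unfolding OPT_val_def
proof (rule cSUP_upper)
  show "D \<in> UNIV" by simp
  show "bdd_above (range (\<lambda>D. run_val (Finst d N p H) D \<pi> []))"
    using run_bound[OF assms] by (intro bdd_aboveI2) auto
qed

lemma golden_inv: "1 / golden_ratio = (sqrt 5 - 1) / 2"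
proof -
  have s: "sqrt 5 * sqrt 5 = 5" by simp
  have "1 + sqrt 5 > 0" by (simp add: add_pos_nonneg)
  then show ?thesis unfolding golden_ratio_def using s
    by (simp add: field_simps)
qed

lemma sqrt5_bounds: "2.2 < sqrt 5" "sqrt 5 < 2.24"
proof -
  show "2.2 < sqrt 5" by (rule real_less_rsqrt) (simp add: power2_eq_square)
  have "sqrt 5 < sqrt (2.24^2)" by (subst real_sqrt_less_iff) (simp add: power2_eq_square)
  then show "sqrt 5 < 2.24" by simp
qed

theorem theorem3p3:
  fixes A :: unaware_alg and \<delta> :: real
  assumes "\<delta> > 0"
  shows "\<exists>F \<pi>. valid_instance F \<and> is_order F \<pi> \<and> OPT_val F \<pi> > 0 \<and>
           ALG_val A F \<pi> \<le> (1 / golden_ratio + \<delta>) * OPT_val F \<pi>"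
proof -
  define g :: real where "g = (sqrt 5 - 1) / 2"
  have gg: "g * g + g = 1" unfolding g_def by (simp add: field_simps power2_eq_square)
  have g1: "0.6 < g" "g < 0.62" using sqrt5_bounds unfolding g_def by auto
  define \<delta>' where "\<delta>' = min \<delta> (1/10)"
  have d'pos: "0 < \<delta>'" "\<delta>' \<le> \<delta>" "\<delta>' \<le> 1/10" using assms unfolding \<delta>'_def by auto
  define r where "r = g + \<delta>'"
  have r1: "0.6 < r" "r < 0.73" using g1 d'pos unfolding r_def by auto
  define e where "e = r * r + r - 1"
  have e_eq: "e = 2 * g * \<delta>' + \<delta>' * \<delta>' + \<delta>'" unfolding e_def r_def using gg
    by (simp add: algebra_simps)
  have epos: "0 < e" unfolding e_eq using d'pos g1
    by (simp add: add_pos_pos mult_pos_pos)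
  have "r * r < r * 1" using r1 by (intro mult_strict_left_mono) auto
  then have e2r: "e < 2 * r" unfolding e_def by linarith
  define p where "p = e / (2 * r)"
  have p0: "0 < p" "p < 1" using epos e2r r1 unfolding p_def by (auto simp: field_simps)
  define H where "H = r / p"
  have Hp: "H * p = r" unfolding H_def using p0 by simp
  have Hpos: "0 < H" unfolding H_def using p0 r1 by simp
  define N where "N = nat \<lceil>2 * (1 - r) / e\<rceil>"
  have Nge: "2 * (1 - r) / e \<le> real N" unfolding N_def by linarith
  have "0 < 2 * (1 - r) / e" using epos r1 by (intro divide_pos_pos) auto
  then have "0 < real N" using Nge by linarith
  then have Npos: "0 < N" by simp
  define c where "c = (1 - r) / real N"
  have c0: "0 \<le> c" unfolding c_def using r1 by simp
  have ce: "c \<le> e / 2"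
  proof -
    have "2 * (1 - r) \<le> real N * e" using Nge epos by (simp add: field_simps)
    then show ?thesis unfolding c_def using Npos by (simp add: field_simps)
  qed
  have cN: "real N * c = 1 - r" unfolding c_def using Npos by simp
  define d where "d = (\<lambda>k::nat. 1 - real k * c)"
  have dle1: "\<forall>k\<le>N. d k \<le> 1" unfolding d_def using c0 by simp
  have dger: "\<And>k. k \<le> N \<Longrightarrow> r \<le> d k"
  proof -
    fix k assume "k \<le> N"
    then have "real k * c \<le> real N * c" using c0 by (simp add: mult_right_mono)
    then show "r \<le> d k" unfolding d_def using cN by simp
  qed
  define F where "F = Finst d N p H"
  define B where "B = max 1 H"
  have Bfacts: "\<forall>k\<le>N. d k \<le> B" "H \<le> B" "0 \<le> B" using dle1 unfolding B_def by force+
  have p01: "0 \<le> p" "p \<le> 1" using p0 by auto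
  note OPTge = OPT_ge[OF Bfacts p01]
  have valid: "valid_instance F"
    unfolding valid_instance_def F_def Finst_len
  proof (intro allI impI)
    fix i assume i: "i < Suc (Suc N)"
    show "finite (set_pmf (Finst d N p H ! i)) \<and> set_pmf (Finst d N p H ! i) \<subseteq> {0..}"
    proof (cases "i \<le> N")
      case True
      then show ?thesis using dger[OF True] r1 by (simp add: Finst_det)
    next
      case False
      then have "i = Suc N" using i by simp
      moreover have "set_pmf (Jp p H) \<subseteq> {H, 0}" unfolding Jp_def by auto
      ultimately show ?thesis using Hpos by (auto simp: Finst_J intro: finite_subset)
    qed
  qed
  have r_le: "r \<le> 1 / golden_ratio + \<delta>" unfolding golden_inv r_def g_def using d'pos by simp
  have fin: "\<exists>\<pi>. is_order F \<pi> \<and> OPT_val F \<pi> > 0 \<and> ALG_val A F \<pi> \<le> r * OPT_val F \<pi>"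
  proof (cases "\<exists>i<N. A F (hist d (Suc i))")
    case True
    define i where "i = (LEAST i. i < N \<and> A F (hist d (Suc i)))"
    have iN: "i < N" and iA: "A F (hist d (Suc i))"
      using LeastI_ex[OF True] unfolding i_def by auto
    have ibef: "\<forall>j. 0 \<le> j \<and> j < i \<longrightarrow> \<not> A F (hist d (Suc j))"
      using iN not_less_Least unfolding i_def by fastforce
    define \<pi> where "\<pi> = [0..<Suc i] @ Suc N # [Suc i..<Suc N]"
    have ord: "is_order F \<pi>" unfolding is_order_def \<pi>_def F_def Finst_len
      using iN by (auto simp: lessThan_Suc_atMost)
    have setpi: "set \<pi> \<subseteq> {..Suc N}" unfolding \<pi>_def using iN by auto
    have alg: "ALG_val A F \<pi> = d i"
    proof -
      have "\<pi> = [0..<i] @ (i # Suc N # [Suc i..<Suc N])" unfolding \<pi>_def by simp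
      then have "ALG_val A F \<pi> = run_val F (A F) ([0..<i] @ (i # Suc N # [Suc i..<Suc N])) (hist d 0)"
        unfolding ALG_val_def by (simp add: hist_def)
      also have "\<dots> = run_val F (A F) (i # Suc N # [Suc i..<Suc N]) (hist d i)"
        unfolding F_def by (rule run_prefix) (use iN ibef in \<open>auto simp: F_def\<close>)
      also have "\<dots> = d i" unfolding F_def run_det[OF less_imp_le[OF iN]]
        using iA by (simp add: hist_Suc F_def)
      finally show ?thesis .
    qed
    define Dopt where "Dopt = (\<lambda>h::history. last h = (Suc N, H) \<or> fst (last h) = Suc i)"
    have optv: "run_val F Dopt \<pi> [] = H * p + d (Suc i) * (1 - p)"
    proof -
      have "run_val F Dopt \<pi> [] = run_val F Dopt ([0..<Suc i] @ (Suc N # [Suc i..<Suc N])) (hist d 0)"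
        unfolding \<pi>_def by (simp add: hist_def)
      also have "\<dots> = run_val F Dopt (Suc N # [Suc i..<Suc N]) (hist d (Suc i))"
        unfolding F_def by (rule run_prefix) (use iN in \<open>auto simp: Dopt_def hist_Suc\<close>)
      also have "\<dots> = H * p + run_val F Dopt [Suc i..<Suc N] (hist d (Suc i) @ [(Suc N, 0)]) * (1 - p)"
        unfolding F_def run_J[OF p01] using iN Hpos by (simp add: Dopt_def)
      also have "[Suc i..<Suc N] = Suc i # [Suc (Suc i)..<Suc N]" using iN by (simp add: upt_rec)
      also have "run_val F Dopt (Suc i # [Suc (Suc i)..<Suc N]) (hist d (Suc i) @ [(Suc N, 0)]) = d (Suc i)"
        unfolding F_def using iN by (simp only: run_det[of "Suc i"]) (simp add: Dopt_def)
      finally show ?thesis .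
    qed
    have opt: "H * p + d (Suc i) * (1 - p) \<le> OPT_val F \<pi>"
      using OPTge[OF setpi, of Dopt] optv unfolding F_def by simp
    have key: "d i \<le> r * (H * p + d (Suc i) * (1 - p))"
    proof -
      have rp: "r * (1 - p) = r - e / 2" unfolding p_def using r1 by (simp add: field_simps)
      have "r * (H * p + d (Suc i) * (1 - p)) = r * r + (r - e/2) * (1 - (real i + 1) * c)"
        unfolding Hp d_def using rp by (simp add: algebra_simps)
      also have "\<dots> = 1 + e/2 - (r - e/2) * (real i + 1) * c"
      proof -
        have "r * r + (r - e/2) * (1 - (real i + 1) * c) - (1 + e/2 - (r - e/2) * (real i + 1) * c)
          = r * r + r - 1 - e" by (simp add: algebra_simps)
        then show ?thesis using e_def by linarith
      qed
      finally have eq: "r * (H * p + d (Suc i) * (1 - p)) = 1 + e/2 - (r - e/2) * (real i + 1) * c" .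
      have a1: "(r - e/2) * (real i + 1) * c - real i * c = c * (r - e/2) + real i * c * (r - e/2 - 1)"
        by (simp add: algebra_simps)
      have a2: "real i * c * (r - e/2 - 1) \<le> 0" using c0 r1 epos
        by (intro mult_nonneg_nonpos) auto
      have a3: "c * (r - e/2) \<le> c" using c0 r1 epos by (simp add: mult_left_le)
      have "(r - e/2) * (real i + 1) * c - real i * c \<le> e/2" using a1 a2 a3 ce by linarith
      moreover have "d i = 1 - real i * c" by (simp add: d_def)
      ultimately show ?thesis using eq by linarith
    qed
    have optpos: "OPT_val F \<pi> > 0"
    proof -
      have "0 \<le> d (Suc i)" using dger[of "Suc i"] iN r1 by simp
      then have "0 \<le> d (Suc i) * (1 - p)" using p0 by simp
      then show ?thesis using opt Hp r1 by linarith
    qed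
    have "ALG_val A F \<pi> \<le> r * OPT_val F \<pi>"
    proof -
      have "r * (H * p + d (Suc i) * (1 - p)) \<le> r * OPT_val F \<pi>"
        using opt r1 by (intro mult_left_mono) auto
      then show ?thesis using alg key by linarith
    qed
    then show ?thesis using ord optpos by blast
  next
    case False
    define \<pi> where "\<pi> = [0..<Suc N] @ [Suc N]"
    have ord: "is_order F \<pi>" unfolding is_order_def \<pi>_def F_def Finst_len
      by (auto simp: lessThan_Suc_atMost)
    have setpi: "set \<pi> \<subseteq> {..Suc N}" unfolding \<pi>_def by auto
    have opt1: "1 \<le> OPT_val F \<pi>"
    proof -
      have "run_val F (\<lambda>_. True) \<pi> [] = d 0"
        unfolding \<pi>_def F_def by (simp only: upt_rec[of 0] if_True) (simp add: Finst_det)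
      then show ?thesis using OPTge[OF setpi, of "\<lambda>_. True"] unfolding F_def d_def by simp
    qed
    have alg: "ALG_val A F \<pi> \<le> r"
    proof -
      have "\<pi> = [0..<N] @ (N # [Suc N])" unfolding \<pi>_def by simp
      then have "ALG_val A F \<pi> = run_val F (A F) ([0..<N] @ (N # [Suc N])) (hist d 0)"
        unfolding ALG_val_def by (simp add: hist_def)
      also have "\<dots> = run_val F (A F) (N # [Suc N]) (hist d N)"
        unfolding F_def by (rule run_prefix) (use False in \<open>auto simp: F_def\<close>)
      also have "\<dots> = (if A F (hist d (Suc N)) then d N else run_val F (A F) [Suc N] (hist d (Suc N)))"
        unfolding F_def run_det[OF order_refl] by (simp add: hist_Suc F_def)
      also have "\<dots> \<le> r"
      proof -
        have "d N = r" unfolding d_def using cN by simp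
        moreover have "run_val F (A F) [Suc N] (hist d (Suc N)) \<le> r"
        proof -
          have "run_val F (A F) [Suc N] (hist d (Suc N)) =
             (if A F (hist d (Suc N) @ [(Suc N, H)]) then H else 0) * p"
            unfolding F_def run_J[OF p01] by simp
          also have "\<dots> \<le> H * p" using Hpos p0 by auto
          finally show ?thesis using Hp by simp
        qed
        ultimately show ?thesis by simp
      qed
      finally show ?thesis .
    qed
    have "ALG_val A F \<pi> \<le> r * OPT_val F \<pi>" using alg opt1 r1
    proof -
      have "r * 1 \<le> r * OPT_val F \<pi>" using opt1 r1 by (intro mult_left_mono) auto
      then show ?thesis using alg by linarith
    qed
    then show ?thesis using ord opt1 by auto
  qed
  then obtain \<pi> where pi: "is_order F \<pi>" "OPT_val F \<pi> > 0" "ALG_val A F \<pi> \<le> r * OPT_val F \<pi>"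
    by blast
  have "r * OPT_val F \<pi> \<le> (1 / golden_ratio + \<delta>) * OPT_val F \<pi>"
    using r_le pi(2) by (simp add: mult_right_mono)
  then show ?thesis using valid pi by (meson order_trans)
qed

end
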